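(* $g\big[\mathbf{RP}_{48}(\mathbb{R})\big]>640.4861$.
   Context: For an $n\times n$ real matrix $A=(a_{i,j})$, Gaussian elimination without pivoting is the recursion $a^{(1)}_{i,j}=a_{i,j}$ and $a^{(k+1)}_{i,j}=a^{(k)}_{i,j}-a^{(k)}_{i,k}a^{(k)}_{k,j}/a^{(k)}_{k,k}$ for $k+1\le i,j\le n$ (defined when all pivots are nonzero). Growth factor: $g(A)=\max_{i,j,k}|a^{(k)}_{i,j}|/\max_{i,j}|a_{i,j}|$; $g[\mathbf{X}]=\sup_{A\in\mathbf{X}}g(A)$. $\mathbf{RP}_n(\mathbb{R})$ is the set of invertible real $n\times n$ matrices for which elimination is defined and $|a^{(k)}_{i,k}|,|a^{(k)}_{k,j}|\le|a^{(k)}_{k,k}|$ for all $k$ and $i,j\ge k$. (Established via an explicit computer-found matrix converted to an exactly rook-pivoted one.) *)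

theory Defs
  imports "HOL-Analysis.Analysis" "HOL-Library.Extended_Real"
begin

text \<open>Matrices of size n are represented as functions nat => nat => real,
  with 0-based indices i, j < n (entries outside are irrelevant).
  Stage k = 0,1,...,n-1 of elimination corresponds to the paper's a^(k+1).\<close>

definition ge_step :: "(nat \<Rightarrow> nat \<Rightarrow> real) \<Rightarrow> nat \<Rightarrow> (nat \<Rightarrow> nat \<Rightarrow> real)" where
  "ge_step M k = (\<lambda>i j. if k < i \<and> k < j then M i j - M i k * M k j / M k k else M i j)"

fun ge_stage :: "(nat \<Rightarrow> nat \<Rightarrow> real) \<Rightarrow> nat \<Rightarrow> (nat \<Rightarrow> nat \<Rightarrow> real)" where
  "ge_stage A 0 = A"
| "ge_stage A (Suc k) = ge_step (ge_stage A k) k"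

definition ge_defined :: "nat \<Rightarrow> (nat \<Rightarrow> nat \<Rightarrow> real) \<Rightarrow> bool" where
  "ge_defined n A \<longleftrightarrow> (\<forall>k<n. ge_stage A k k k \<noteq> 0)"

definition growth :: "nat \<Rightarrow> (nat \<Rightarrow> nat \<Rightarrow> real) \<Rightarrow> real" where
  "growth n A = Max {\<bar>ge_stage A k i j\<bar> | k i j. k < n \<and> k \<le> i \<and> i < n \<and> k \<le> j \<and> j < n}
               / Max {\<bar>A i j\<bar> | i j. i < n \<and> j < n}"

definition invertible_mat :: "nat \<Rightarrow> (nat \<Rightarrow> nat \<Rightarrow> real) \<Rightarrow> bool" where
  "invertible_mat n A \<longleftrightarrow> (\<exists>B. \<forall>i<n. \<forall>j<n.
      (\<Sum>l<n. A i l * B l j) = (if i = j then 1 else 0) \<and>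
      (\<Sum>l<n. B i l * A l j) = (if i = j then 1 else 0))"

text \<open>Rook pivoting set RP_n(R) (matrices with entries outside the n x n block zero,
  so that each matrix is represented exactly once).\<close>
definition RP :: "nat \<Rightarrow> (nat \<Rightarrow> nat \<Rightarrow> real) set" where
  "RP n = {A. (\<forall>i j. (n \<le> i \<or> n \<le> j) \<longrightarrow> A i j = 0) \<and>
              invertible_mat n A \<and> ge_defined n A \<and>
              (\<forall>k<n. \<forall>i. k \<le> i \<and> i < n \<longrightarrow>
                  \<bar>ge_stage A k i k\<bar> \<le> \<bar>ge_stage A k k k\<bar> \<and>
                  \<bar>ge_stage A k k i\<bar> \<le> \<bar>ge_stage A k k k\<bar>)}"

definition growth_sup :: "nat \<Rightarrow> (nat \<Rightarrow> nat \<Rightarrow> real) set \<Rightarrow> ereal" where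
  "growth_sup n X = (SUP A\<in>X. ereal (growth n A))"

end

theory Submission imports Defs "Jordan_Normal_Form.Determinant" begin


lemma schur:
  fixes L U A :: "nat \<Rightarrow> nat \<Rightarrow> real"
  assumes Ldiag: "\<And>i. i<n \<Longrightarrow> L i i = 1"
  and Lup: "\<And>i j. i<j \<Longrightarrow> j<n \<Longrightarrow> L i j = 0"
  and Ulow: "\<And>i j. j<i \<Longrightarrow> i<n \<Longrightarrow> U i j = 0"
  and Udiag: "\<And>i. i<n \<Longrightarrow> U i i \<noteq> 0"
  and A: "\<And>i j. i<n \<Longrightarrow> j<n \<Longrightarrow> A i j = (\<Sum>l<n. L i l * U l j)"
  shows "k \<le> n \<Longrightarrow> k \<le> i \<Longrightarrow> i < n \<Longrightarrow> k \<le> j \<Longrightarrow> j < n \<Longrightarrow>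
     ge_stage A k i j = (\<Sum>l\<in>{k..<n}. L i l * U l j)"
proof (induction k arbitrary: i j)
  case 0
  then show ?case using A by (simp add: atLeast0LessThan)
next
  case (Suc k)
  have kn: "k < n" using Suc by simp
  have IH: "\<And>i j. k\<le>i \<Longrightarrow> i<n \<Longrightarrow> k\<le>j \<Longrightarrow> j<n \<Longrightarrow>
     ge_stage A k i j = (\<Sum>l\<in>{k..<n}. L i l * U l j)" using Suc.IH kn by auto
  have split: "\<And>i j. (\<Sum>l\<in>{k..<n}. L i l * U l j) = L i k * U k j + (\<Sum>l\<in>{Suc k..<n}. L i l * U l j)"
    using kn by (simp add: sum.atLeast_Suc_lessThan)
  have sik: "ge_stage A k i k = L i k * U k k"
  proof -
    have "(\<Sum>l\<in>{Suc k..<n}. L i l * U l k) = 0" by (rule sum.neutral) (auto simp: Ulow)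
    then show ?thesis using IH[of i k] split[of i k] Suc.prems kn by simp
  qed
  have skj: "ge_stage A k k j = U k j"
  proof -
    have "(\<Sum>l\<in>{Suc k..<n}. L k l * U l j) = 0" by (rule sum.neutral) (auto simp: Lup)
    then show ?thesis using IH[of k j] split[of k j] Suc.prems kn Ldiag[of k] by simp
  qed
  have skk: "ge_stage A k k k = U k k"
  proof -
    have "(\<Sum>l\<in>{Suc k..<n}. L k l * U l k) = 0" by (rule sum.neutral) (auto simp: Lup)
    then show ?thesis using IH[of k k] split[of k k] kn Ldiag[of k] by simp
  qed
  have "ge_stage A (Suc k) i j = ge_stage A k i j - ge_stage A k i k * ge_stage A k k j / ge_stage A k k k"
    using Suc.prems by (simp add: ge_step_def)
  also have "\<dots> = (\<Sum>l\<in>{Suc k..<n}. L i l * U l j)"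
    using IH[of i j] split[of i j] sik skj skk Udiag[OF kn] Suc.prems by simp
  finally show ?case .
qed

lemma inv_LU:
  fixes L U :: "nat \<Rightarrow> nat \<Rightarrow> real"
  assumes Ldiag: "\<And>i. i<n \<Longrightarrow> L i i = 1"
  and Lup: "\<And>i j. i<j \<Longrightarrow> j<n \<Longrightarrow> L i j = 0"
  and Ulow: "\<And>i j. j<i \<Longrightarrow> i<n \<Longrightarrow> U i j = 0"
  and Udiag: "\<And>i. i<n \<Longrightarrow> U i i \<noteq> 0"
  shows "Defs.invertible_mat n (\<lambda>i j. \<Sum>l<n. L i l * U l j)"
proof -
  define Lm where "Lm = mat n n (\<lambda>(i,j). L i j)"
  define Um where "Um = mat n n (\<lambda>(i,j). U i j)"
  have Lc: "Lm \<in> carrier_mat n n" and Uc: "Um \<in> carrier_mat n n" by (auto simp: Lm_def Um_def)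
  have dL: "det Lm = 1"
  proof -
    have "det Lm = prod_list (diag_mat Lm)"
      by (rule det_lower_triangular[OF _ Lc]) (auto simp: Lm_def Lup)
    also have "\<dots> = prod_list (map (\<lambda>i. 1) [0..<n])" unfolding diag_mat_def by (intro arg_cong[where f=prod_list] map_cong) (auto simp: Lm_def Ldiag)
    also have "\<dots> = 1" by (induct n) auto
    finally show ?thesis .
  qed
  have dU: "det Um \<noteq> 0"
  proof -
    have "det Um = prod_list (diag_mat Um)"
      by (rule det_upper_triangular[OF _ Uc]) (auto simp: Um_def Ulow upper_triangular_def)
    also have "\<dots> \<noteq> 0" by (auto simp: diag_mat_def Um_def Udiag prod_list_zero_iff)
    finally show ?thesis .
  qed
  have Ac: "Lm * Um \<in> carrier_mat n n" using Lc Uc by auto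
  have "det (Lm * Um) \<noteq> 0" using det_mult[OF Lc Uc] dL dU by simp
  from det_non_zero_imp_unit[OF Ac this, unfolded Units_def, of "()"]
  obtain B where B: "B \<in> carrier_mat n n" and BA: "B * (Lm * Um) = 1\<^sub>m n" and AB: "(Lm * Um) * B = 1\<^sub>m n"
    by (auto simp: ring_mat_def)
  have Aent: "\<And>i j. i<n \<Longrightarrow> j<n \<Longrightarrow> (Lm * Um) $$ (i,j) = (\<Sum>l<n. L i l * U l j)"
    using Lc Uc by (auto simp: Lm_def Um_def scalar_prod_def atLeast0LessThan intro!: sum.cong)
  have dims: "dim_row (Lm*Um) = n" "dim_col (Lm*Um) = n" "dim_row B = n" "dim_col B = n"
    using Ac B by auto
  show ?thesis unfolding Defs.invertible_mat_def
  proof (intro exI[of _ "\<lambda>i j. B $$ (i,j)"] allI impI conjI)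
    fix i j assume ij: "i<n" "j<n"
    have "((Lm * Um) * B) $$ (i,j) = (\<Sum>l<n. (Lm*Um) $$ (i,l) * B $$ (l,j))"
      using dims ij by (simp add: scalar_prod_def atLeast0LessThan)
    then show "(\<Sum>l<n. (\<Sum>l'<n. L i l' * U l' l) * B $$ (l, j)) = (if i = j then 1 else 0)"
      using AB ij Aent by simp
    have "(B * (Lm * Um)) $$ (i,j) = (\<Sum>l<n. B $$ (i,l) * (Lm*Um) $$ (l,j))"
      using dims ij by (simp add: scalar_prod_def atLeast0LessThan)
    then show "(\<Sum>l<n. B $$ (i, l) * (\<Sum>l'<n. L l l' * U l' j)) = (if i = j then 1 else 0)"
      using BA ij Aent by simp
  qed
qed



fun zeros :: "nat \<Rightarrow> int list \<Rightarrow> bool" where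
  "zeros 0 [] = True"
| "zeros (Suc a) (x#xs) = (x = 0 \<and> zeros a xs)"
| "zeros _ _ = False"

fun chkRowL :: "nat \<Rightarrow> nat \<Rightarrow> int list \<Rightarrow> bool" where
  "chkRowL (Suc k) a (x#xs) = (\<bar>x\<bar> \<le> 1000 \<and> chkRowL k a xs)"
| "chkRowL 0 a (x#xs) = (x = 1000 \<and> zeros a xs)"
| "chkRowL _ _ [] = False"

fun chkL :: "nat \<Rightarrow> nat \<Rightarrow> int list list \<Rightarrow> bool" where
  "chkL k 0 [r] = chkRowL k 0 r"
| "chkL k (Suc a) (r#rs) = (chkRowL k (Suc a) r \<and> chkL (Suc k) a rs)"
| "chkL _ _ _ = False"

fun bnd :: "int \<Rightarrow> nat \<Rightarrow> int list \<Rightarrow> bool" where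
  "bnd d 0 [] = True"
| "bnd d (Suc a) (x#xs) = (\<bar>x\<bar> \<le> \<bar>d\<bar> \<and> bnd d a xs)"
| "bnd _ _ _ = False"

fun chkRowU :: "nat \<Rightarrow> nat \<Rightarrow> int list \<Rightarrow> bool" where
  "chkRowU (Suc k) a (x#xs) = (x = 0 \<and> chkRowU k a xs)"
| "chkRowU 0 a (x#xs) = (x \<noteq> 0 \<and> bnd x a xs)"
| "chkRowU _ _ [] = False"

fun chkU :: "nat \<Rightarrow> nat \<Rightarrow> int list list \<Rightarrow> bool" where
  "chkU k 0 [r] = chkRowU k 0 r"
| "chkU k (Suc a) (r#rs) = (chkRowU k (Suc a) r \<and> chkU (Suc k) a rs)"
| "chkU _ _ _ = False"

fun comb :: "int list \<Rightarrow> int list list \<Rightarrow> int list" where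
  "comb [c] [u] = map ((*) c) u"
| "comb (c#cs) (u#us) = map2 (+) (map ((*) c) u) (comb cs us)"
| "comb _ _ = []"

definition Lz :: "int list list" where "Lz = [[1000,0,0,0,0,0,0,0,0,0,0,0,0,0,0,0,0,0,0,0,0,0,0,0,0,0,0,0,0,0,0,0,0,0,0,0,0,0,0,0,0,0,0,0,0,0,0,0],
  [0,1000,0,0,0,0,0,0,0,0,0,0,0,0,0,0,0,0,0,0,0,0,0,0,0,0,0,0,0,0,0,0,0,0,0,0,0,0,0,0,0,0,0,0,0,0,0,0],
  [-5,2,1000,0,0,0,0,0,0,0,0,0,0,0,0,0,0,0,0,0,0,0,0,0,0,0,0,0,0,0,0,0,0,0,0,0,0,0,0,0,0,0,0,0,0,0,0,0],
  [-4,1,7,1000,0,0,0,0,0,0,0,0,0,0,0,0,0,0,0,0,0,0,0,0,0,0,0,0,0,0,0,0,0,0,0,0,0,0,0,0,0,0,0,0,0,0,0,0],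
  [-3,-4,3,2,1000,0,0,0,0,0,0,0,0,0,0,0,0,0,0,0,0,0,0,0,0,0,0,0,0,0,0,0,0,0,0,0,0,0,0,0,0,0,0,0,0,0,0,0],
  [-1,5,11,5,-3,1000,0,0,0,0,0,0,0,0,0,0,0,0,0,0,0,0,0,0,0,0,0,0,0,0,0,0,0,0,0,0,0,0,0,0,0,0,0,0,0,0,0,0],
  [-2,-4,-4,-2,4,-9,1000,0,0,0,0,0,0,0,0,0,0,0,0,0,0,0,0,0,0,0,0,0,0,0,0,0,0,0,0,0,0,0,0,0,0,0,0,0,0,0,0,0],
  [0,-7,9,3,-4,-4,3,1000,0,0,0,0,0,0,0,0,0,0,0,0,0,0,0,0,0,0,0,0,0,0,0,0,0,0,0,0,0,0,0,0,0,0,0,0,0,0,0,0],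
  [-519,-374,483,355,68,-6,50,338,1000,0,0,0,0,0,0,0,0,0,0,0,0,0,0,0,0,0,0,0,0,0,0,0,0,0,0,0,0,0,0,0,0,0,0,0,0,0,0,0],
  [-521,-249,419,284,16,-5,646,183,456,1000,0,0,0,0,0,0,0,0,0,0,0,0,0,0,0,0,0,0,0,0,0,0,0,0,0,0,0,0,0,0,0,0,0,0,0,0,0,0],
  [-77,17,134,49,-40,72,76,32,56,27,1000,0,0,0,0,0,0,0,0,0,0,0,0,0,0,0,0,0,0,0,0,0,0,0,0,0,0,0,0,0,0,0,0,0,0,0,0,0],
  [20,842,474,-68,-784,1000,780,-780,-859,774,-338,1000,0,0,0,0,0,0,0,0,0,0,0,0,0,0,0,0,0,0,0,0,0,0,0,0,0,0,0,0,0,0,0,0,0,0,0,0],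
  [-227,-182,-891,301,668,-998,-458,750,341,-292,228,-721,1000,0,0,0,0,0,0,0,0,0,0,0,0,0,0,0,0,0,0,0,0,0,0,0,0,0,0,0,0,0,0,0,0,0,0,0],
  [-997,-393,755,566,-222,-533,385,965,825,895,-117,21,412,1000,0,0,0,0,0,0,0,0,0,0,0,0,0,0,0,0,0,0,0,0,0,0,0,0,0,0,0,0,0,0,0,0,0,0],
  [-5,78,-286,-534,59,303,220,-297,-168,-10,85,149,-269,-515,1000,0,0,0,0,0,0,0,0,0,0,0,0,0,0,0,0,0,0,0,0,0,0,0,0,0,0,0,0,0,0,0,0,0],
  [599,-35,-802,-148,210,102,-727,42,-369,-756,47,-158,104,-409,-104,1000,0,0,0,0,0,0,0,0,0,0,0,0,0,0,0,0,0,0,0,0,0,0,0,0,0,0,0,0,0,0,0,0],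
  [-141,-285,-573,9,738,-171,2,-8,217,-489,172,-43,-371,-483,524,520,1000,0,0,0,0,0,0,0,0,0,0,0,0,0,0,0,0,0,0,0,0,0,0,0,0,0,0,0,0,0,0,0],
  [999,158,-860,-212,613,377,-309,-886,-800,-828,-120,-1,-230,-706,125,148,55,1000,0,0,0,0,0,0,0,0,0,0,0,0,0,0,0,0,0,0,0,0,0,0,0,0,0,0,0,0,0,0],
  [345,-80,-96,-211,75,-689,30,386,-214,-4,-418,-271,125,382,-491,79,-53,399,1000,0,0,0,0,0,0,0,0,0,0,0,0,0,0,0,0,0,0,0,0,0,0,0,0,0,0,0,0,0],
  [357,-213,-751,-235,506,-288,-424,221,-282,-993,587,-431,124,-529,443,36,209,367,146,1000,0,0,0,0,0,0,0,0,0,0,0,0,0,0,0,0,0,0,0,0,0,0,0,0,0,0,0,0],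
  [-675,-269,803,373,-70,175,418,43,612,323,367,140,-141,123,-81,-254,-80,268,174,421,1000,0,0,0,0,0,0,0,0,0,0,0,0,0,0,0,0,0,0,0,0,0,0,0,0,0,0,0],
  [898,-964,195,618,923,1,526,-391,-341,-668,712,-193,-401,-139,-29,610,417,526,69,160,-484,1000,0,0,0,0,0,0,0,0,0,0,0,0,0,0,0,0,0,0,0,0,0,0,0,0,0,0],
  [-959,-881,859,656,-656,-952,-982,-153,119,-368,490,-476,647,355,-716,-388,-400,-114,278,199,-70,-224,1000,0,0,0,0,0,0,0,0,0,0,0,0,0,0,0,0,0,0,0,0,0,0,0,0,0],
  [157,-225,-988,-207,504,-999,6,990,-141,-958,-715,-459,576,127,710,-425,-113,357,442,446,-474,-638,79,1000,0,0,0,0,0,0,0,0,0,0,0,0,0,0,0,0,0,0,0,0,0,0,0,0],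
  [-760,-511,-500,954,829,-988,116,893,520,-243,771,-732,217,-35,90,986,618,-101,140,-91,-589,567,72,-507,1000,0,0,0,0,0,0,0,0,0,0,0,0,0,0,0,0,0,0,0,0,0,0,0],
  [-394,981,-572,-845,544,967,732,-122,156,998,-619,250,-519,-124,533,513,676,-749,-29,-319,103,-76,-631,-300,68,1000,0,0,0,0,0,0,0,0,0,0,0,0,0,0,0,0,0,0,0,0,0,0],
  [-993,411,303,-494,-993,995,-595,780,999,179,-166,46,540,-712,881,-721,-591,204,-166,619,485,-962,-66,967,-433,-166,1000,0,0,0,0,0,0,0,0,0,0,0,0,0,0,0,0,0,0,0,0,0],
  [230,-697,-741,1000,811,591,-888,878,1000,-643,828,-773,936,-787,225,954,367,287,-803,795,935,56,-675,-580,839,-198,449,1000,0,0,0,0,0,0,0,0,0,0,0,0,0,0,0,0,0,0,0,0],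
  [-411,616,-638,-779,-240,-30,-954,-996,-883,673,-851,-281,222,167,-635,985,-409,-141,440,-993,-775,131,648,-667,868,396,225,6,1000,0,0,0,0,0,0,0,0,0,0,0,0,0,0,0,0,0,0,0],
  [740,773,626,299,941,-446,998,-963,-918,545,-51,181,-959,306,729,-533,-155,996,994,-777,-1000,776,300,50,34,-1000,-510,-613,-208,1000,0,0,0,0,0,0,0,0,0,0,0,0,0,0,0,0,0,0],
  [799,999,-998,510,-999,-986,940,1000,-851,-985,198,997,561,463,-879,-782,1000,396,-983,515,1000,-430,-908,580,-482,-999,-958,72,-813,1000,1000,0,0,0,0,0,0,0,0,0,0,0,0,0,0,0,0,0],
  [-994,-988,487,-38,-996,-988,-116,878,1000,-620,999,-580,55,-857,999,-181,-126,911,941,-562,-997,55,944,632,-707,-964,767,-970,980,569,-14,1000,0,0,0,0,0,0,0,0,0,0,0,0,0,0,0,0],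
  [994,989,-973,920,-563,-347,912,999,-706,-696,-729,404,-806,997,-998,-90,670,-904,-795,-776,-225,498,-605,-38,655,-997,-904,67,-945,460,188,-267,1000,0,0,0,0,0,0,0,0,0,0,0,0,0,0,0],
  [976,-916,-995,1000,-986,-889,-885,-1000,403,963,-11,177,999,1000,-668,876,679,-934,-861,-999,1000,742,-407,-342,-716,-1000,-289,474,999,-999,36,646,-775,1000,0,0,0,0,0,0,0,0,0,0,0,0,0,0],
  [-284,-989,605,-992,-999,-110,985,-959,-996,301,975,796,143,-605,364,-995,-928,-986,-363,984,277,-788,919,1000,994,-946,-996,-358,999,-589,303,-294,-185,119,1000,0,0,0,0,0,0,0,0,0,0,0,0,0],
  [-392,104,259,761,-3,954,992,-998,-945,662,430,-595,546,826,-718,-997,-983,-991,994,-999,-997,565,341,349,936,-999,-978,-362,770,-553,-220,283,-83,336,368,1000,0,0,0,0,0,0,0,0,0,0,0,0],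
  [271,296,882,995,430,-554,176,861,877,748,-951,234,-891,256,912,566,995,-388,-500,-549,-999,211,-971,-106,-407,560,529,135,-296,778,-101,86,347,-186,-352,-355,1000,0,0,0,0,0,0,0,0,0,0,0],
  [999,931,834,999,-54,994,-997,-962,1000,599,644,1000,1000,-994,924,1000,-990,-998,1000,1000,-995,988,656,943,334,-717,-254,-999,238,-990,-660,-230,-592,-17,701,997,-672,1000,0,0,0,0,0,0,0,0,0,0],
  [997,999,996,984,-992,-377,-987,998,767,-721,-1000,238,-846,-475,-924,-527,682,999,975,754,-994,999,998,-1000,292,-128,974,916,885,975,871,1000,-428,-540,-667,543,-394,296,1000,0,0,0,0,0,0,0,0,0],
  [-996,999,-999,998,-988,976,-1000,-977,-982,1000,997,999,-994,1000,834,990,-1000,1000,998,-174,-999,996,-785,1000,996,994,859,-927,921,-1000,-402,873,988,435,-956,-994,927,-283,573,1000,0,0,0,0,0,0,0,0],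
  [999,1000,-993,995,993,983,-1000,1000,997,826,1000,1000,960,-997,-988,-1000,-689,1000,-754,-1000,815,749,977,238,1000,1000,-1000,-839,801,-484,-971,894,-821,-738,997,-1000,-382,773,-538,-209,1000,0,0,0,0,0,0,0],
  [1000,-996,907,976,976,-76,-994,999,1000,999,1000,994,-997,-137,772,-998,-1000,-999,998,-907,-858,-960,-981,912,307,990,-713,932,330,999,996,-973,-915,990,-711,69,-982,31,999,254,-188,1000,0,0,0,0,0,0],
  [1000,-1000,-995,659,-885,1000,-127,1000,991,-943,907,1000,1000,937,999,-1000,997,953,-909,-777,123,778,997,460,997,994,925,624,999,974,-999,-991,493,214,-983,958,-833,-711,-990,-822,503,655,1000,0,0,0,0,0],
  [-999,-1000,-800,911,-1000,1000,-999,-1000,-1000,1000,-981,-1000,-996,568,999,-857,998,912,-1000,996,40,-935,-998,997,797,-988,-999,584,-548,963,-991,803,958,-175,-995,-228,-999,999,555,821,995,327,-530,1000,0,0,0,0],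
  [949,-638,999,967,-998,745,930,534,-984,-907,993,-458,-827,996,1000,997,854,943,-998,-710,995,-999,-921,991,927,-145,958,394,-1000,-905,-989,-430,-999,-942,919,994,-993,-997,830,450,-704,-949,-854,-87,1000,0,0,0],
  [-956,998,990,-1000,1000,-1000,-972,-542,998,999,1000,987,-966,-917,-941,648,-810,998,-992,1000,-1000,-987,-949,772,-343,-946,998,977,-982,-978,989,991,1000,997,386,1000,-529,990,-649,-990,967,534,-62,-978,-514,1000,0,0],
  [-536,-997,-998,-1000,-999,732,-1000,1000,987,998,880,1000,-994,-999,-1000,-992,1000,997,744,977,-993,999,986,999,999,999,-999,1000,-755,1000,-1000,-747,-976,1000,-913,960,328,-913,-146,-971,-907,-995,-994,638,954,-944,1000,0],
  [1000,-998,1000,-1000,-1000,-1000,-1000,-964,1000,1000,999,1000,1000,-1000,-996,1000,1000,1000,-985,997,-953,-1000,-1000,1000,998,989,-999,-1000,999,986,-999,-1000,998,1000,-999,996,-998,-1000,1000,-1000,1000,-1000,-1000,-999,-1000,-1000,-1000,1000]]"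
definition Uz :: "int list list" where "Uz = [[996,0,-2,-43,3,0,7,-21,-49,206,46,-982,-233,294,613,-297,-494,217,-413,438,348,313,914,-773,-904,817,-184,-934,-717,575,852,652,986,996,-987,-993,993,520,-984,996,-991,-995,-996,993,-950,996,983,-993],
  [0,996,1,-29,-4,-3,-1,0,103,-29,-26,-684,-245,345,375,-499,643,-771,410,-7,699,90,993,64,328,985,-709,992,996,795,-994,-994,919,644,-929,-742,-977,971,-749,995,988,994,-958,996,-990,-183,-961,996],
  [0,0,998,22,-2,-7,-2,-2,-308,-296,-77,330,529,380,-121,69,857,-168,438,-462,469,988,-986,487,966,-694,-206,800,978,-830,319,878,990,998,-642,-954,-278,994,-998,990,-995,974,970,998,994,-990,998,-998],
  [0,0,0,999,0,-15,2,13,35,39,117,725,-193,-970,-527,223,-264,112,-108,110,-501,-999,415,233,-850,981,556,369,-724,812,-683,-999,769,992,986,999,-581,-995,-990,-999,-678,-998,-999,991,205,998,994,997],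
  [0,0,0,0,998,5,-7,1,-311,-21,44,752,277,218,-376,179,789,-203,511,-264,260,11,477,418,202,-869,841,-997,887,344,-994,5,-992,863,-998,-662,793,-984,461,998,-987,-995,-892,998,978,-994,-998,998],
  [0,0,0,0,0,1000,4,-8,-13,-272,-116,-84,61,-102,-372,316,218,282,3,-233,-401,-629,-132,-100,-999,-816,-942,-654,985,-469,1000,-399,474,978,979,-599,932,-519,730,-1000,-626,-999,-868,-998,984,999,-776,999],
  [0,0,0,0,0,0,1000,-3,842,206,-5,-125,-414,-739,-251,292,-499,887,-689,285,-739,-997,367,-278,-622,935,567,968,-403,959,-980,913,-8,999,-987,-1000,-531,1000,989,-656,961,-992,-660,-751,977,-979,996,1000],
  [0,0,0,0,0,0,0,1000,-678,600,-111,-412,691,103,118,204,-39,8,125,129,-8,821,-298,-822,-840,-984,-650,-999,984,-987,-999,-999,988,992,-980,993,365,986,999,998,999,-999,-567,-996,-1000,1000,-995,676],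
  [0,0,0,0,0,0,0,0,1353,-673,6,-380,-1099,52,71,-264,-568,706,-868,353,-381,-1033,942,484,342,657,-1038,254,12,-25,1211,369,-702,-1271,546,-1328,1252,-741,-1212,1353,1250,-805,-1352,1352,-192,1352,-1328,-1352],
  [0,0,0,0,0,0,0,0,0,1270,-94,-1216,250,21,644,43,114,63,-73,423,367,515,1120,-1207,-1156,291,860,-1268,-1119,1176,1031,-1237,1267,-1269,-1161,1268,1247,-1073,-1270,499,-1268,1269,1270,-897,-594,-3,-1269,-1269],
  [0,0,0,0,0,0,0,0,0,0,1021,-825,-399,668,247,-461,769,-934,478,110,703,405,817,-968,-836,998,-882,-385,145,998,-1020,-222,715,-1015,-1020,-879,808,890,989,-980,-1021,-1019,991,1021,-850,1014,-1003,-1021],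
  [0,0,0,0,0,0,0,0,0,0,0,2269,687,-330,-599,741,-48,317,302,-449,-261,-624,-705,-224,124,-2128,202,-768,-612,-2251,-2269,1026,-2060,-736,395,-614,673,-2131,1968,2268,1596,-2156,-2267,2267,-2269,2269,-2262,-2269],
  [0,0,0,0,0,0,0,0,0,0,0,0,1410,155,138,121,613,-185,551,-112,-168,110,-1072,-205,192,-758,548,1248,-964,-970,1297,1400,202,-181,-338,-1296,-309,-1381,1406,1409,-1410,1405,-1408,1408,1403,1410,1408,-1404],
  [0,0,0,0,0,0,0,0,0,0,0,0,0,1813,399,-200,543,49,134,693,182,-82,1760,-641,-872,-190,-1770,-768,1648,85,343,529,-1613,861,1795,-857,585,176,1809,-1813,-1813,-1599,-1664,1180,-1807,-1790,1805,1812],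
  [0,0,0,0,0,0,0,0,0,0,0,0,0,0,1207,-218,114,-297,-38,-258,220,935,39,-1115,669,-70,-1184,1206,43,-1195,1206,92,1196,679,51,1206,851,-1200,776,-1207,-1073,-1206,-1206,947,400,-1196,1206,1195],
  [0,0,0,0,0,0,0,0,0,0,0,0,0,0,0,1334,-572,570,-92,230,-465,-567,801,86,-1142,-634,-1199,1326,1318,1334,-901,1326,1237,710,-1101,213,1227,-1050,-1334,-1269,748,1334,950,1334,1120,-1327,1333,-1323],
  [0,0,0,0,0,0,0,0,0,0,0,0,0,0,0,0,1830,-1220,1326,-641,915,-72,650,467,310,-778,1253,-1639,395,-1588,1828,-1320,1359,-806,231,-1829,-410,1767,1108,1809,-672,1829,-879,-1830,-1788,926,1828,-1825],
  [0,0,0,0,0,0,0,0,0,0,0,0,0,0,0,0,0,1595,-294,181,-215,-445,-12,-169,-287,-354,-1206,1395,388,-1579,1591,-1595,1254,-1260,1541,1594,1324,1586,1403,1595,-850,1581,1578,968,-1595,-1224,-1513,-1595],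
  [0,0,0,0,0,0,0,0,0,0,0,0,0,0,0,0,0,0,1255,116,863,-1119,131,231,248,-936,755,-793,-762,-1206,-1239,1032,1253,-1254,1220,-1251,-703,-1227,-1160,-1230,1255,-1244,-1254,1254,1254,1236,-1252,1231],
  [0,0,0,0,0,0,0,0,0,0,0,0,0,0,0,0,0,0,0,1470,-325,223,1176,-945,-1372,887,-183,-1304,489,981,-1114,-345,-1459,1434,1470,-20,-1300,-1425,-1457,945,1470,1459,-1398,-1348,645,-1450,-1109,-1470],
  [0,0,0,0,0,0,0,0,0,0,0,0,0,0,0,0,0,0,0,0,1490,305,57,1108,1486,-628,1087,-446,131,1485,-450,1443,1486,1486,-972,1489,929,1463,1485,-1391,-1489,1460,-1108,-1442,-20,1428,1488,1484],
  [0,0,0,0,0,0,0,0,0,0,0,0,0,0,0,0,0,0,0,0,0,2502,-2425,1206,1862,-289,1006,1409,376,243,1658,449,110,-2502,452,2303,-2497,-1821,1301,-39,2501,1678,-2502,-2352,-2495,2177,-2502,2500],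
  [0,0,0,0,0,0,0,0,0,0,0,0,0,0,0,0,0,0,0,0,0,0,3244,-397,-1981,429,-737,-13,322,1616,1321,-130,3093,3183,-2785,-880,2155,-830,3243,2751,3239,-3189,-3244,-3231,-3163,-540,-3241,3237],
  [0,0,0,0,0,0,0,0,0,0,0,0,0,0,0,0,0,0,0,0,0,0,0,3070,699,-194,1965,1280,1642,2752,1613,1812,1600,-1786,-2054,-743,-263,-929,-2568,-3039,-2125,2400,3069,-2641,-3031,3006,-2798,-3070],
  [0,0,0,0,0,0,0,0,0,0,0,0,0,0,0,0,0,0,0,0,0,0,0,0,2641,-825,1533,-798,-1699,-461,2641,1781,-2040,2622,-662,-2414,433,2556,-2251,-1320,-2630,2085,1041,-435,-2610,2636,-2621,-2637],
  [0,0,0,0,0,0,0,0,0,0,0,0,0,0,0,0,0,0,0,0,0,0,0,0,0,2362,139,1484,10,875,2208,2171,1668,1417,2249,2237,-1671,-472,2353,2362,571,-2362,2355,1843,-2269,2362,-2362,-2352],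
  [0,0,0,0,0,0,0,0,0,0,0,0,0,0,0,0,0,0,0,0,0,0,0,0,0,0,3811,-3099,-2671,2207,-506,328,-3355,2461,693,-2237,-3557,2829,3793,-287,2121,-3808,-3794,3811,-3693,-3810,3336,3796],
  [0,0,0,0,0,0,0,0,0,0,0,0,0,0,0,0,0,0,0,0,0,0,0,0,0,0,0,4432,1205,29,-3187,1145,3116,-4204,-264,-1250,-1240,-4036,1239,2023,4351,-4431,4428,-4432,-4425,-4197,-4224,4421],
  [0,0,0,0,0,0,0,0,0,0,0,0,0,0,0,0,0,0,0,0,0,0,0,0,0,0,0,0,3717,473,-3460,-2549,9,-2780,1173,1617,-481,1647,-861,-120,-3717,-1983,-3717,-3374,3712,3696,2325,-3713],
  [0,0,0,0,0,0,0,0,0,0,0,0,0,0,0,0,0,0,0,0,0,0,0,0,0,0,0,0,0,4306,-2174,3202,-2715,2951,4233,-347,-3258,-1803,4192,4108,4303,-3910,4229,-4306,-341,4272,3227,-4281],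
  [0,0,0,0,0,0,0,0,0,0,0,0,0,0,0,0,0,0,0,0,0,0,0,0,0,0,0,0,0,0,8776,-483,2149,-1766,-617,2814,4171,-1664,-5752,-3504,-3471,-8753,-8136,8766,6386,-8749,-8715,8776],
  [0,0,0,0,0,0,0,0,0,0,0,0,0,0,0,0,0,0,0,0,0,0,0,0,0,0,0,0,0,0,0,6392,-685,5558,-254,-1376,-64,-6377,-2921,1744,-3842,6115,6091,1815,-6339,-6378,-6251,6391],
  [0,0,0,0,0,0,0,0,0,0,0,0,0,0,0,0,0,0,0,0,0,0,0,0,0,0,0,0,0,0,0,0,5529,-2554,1270,1757,144,-5011,4183,5192,-5528,286,800,4886,5520,-5528,-4271,-5511],
  [0,0,0,0,0,0,0,0,0,0,0,0,0,0,0,0,0,0,0,0,0,0,0,0,0,0,0,0,0,0,0,0,0,12215,4821,-2431,-6893,4807,11819,11972,11157,-10973,8526,5133,6217,-1675,-12129,-12214],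
  [0,0,0,0,0,0,0,0,0,0,0,0,0,0,0,0,0,0,0,0,0,0,0,0,0,0,0,0,0,0,0,0,0,0,12338,1619,-7336,-5382,11926,11758,11889,-226,5439,12210,-10871,-6468,8738,12335],
  [0,0,0,0,0,0,0,0,0,0,0,0,0,0,0,0,0,0,0,0,0,0,0,0,0,0,0,0,0,0,0,0,0,0,0,6680,4471,1138,2293,6579,6674,-4638,-4479,986,-6146,-6481,5413,-6678],
  [0,0,0,0,0,0,0,0,0,0,0,0,0,0,0,0,0,0,0,0,0,0,0,0,0,0,0,0,0,0,0,0,0,0,0,0,5505,5175,5505,-1775,5407,2500,-5131,-85,129,-2140,-5491,5494],
  [0,0,0,0,0,0,0,0,0,0,0,0,0,0,0,0,0,0,0,0,0,0,0,0,0,0,0,0,0,0,0,0,0,0,0,0,0,13440,11836,-6583,-13110,-8416,12508,-12705,12761,-13357,-13406,13398],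
  [0,0,0,0,0,0,0,0,0,0,0,0,0,0,0,0,0,0,0,0,0,0,0,0,0,0,0,0,0,0,0,0,0,0,0,0,0,0,16722,-6397,-896,15999,16640,16250,13462,11420,15981,-16706],
  [0,0,0,0,0,0,0,0,0,0,0,0,0,0,0,0,0,0,0,0,0,0,0,0,0,0,0,0,0,0,0,0,0,0,0,0,0,0,0,28986,26960,-28264,-7634,-22249,-11822,-21163,28440,28982],
  [0,0,0,0,0,0,0,0,0,0,0,0,0,0,0,0,0,0,0,0,0,0,0,0,0,0,0,0,0,0,0,0,0,0,0,0,0,0,0,0,29003,-18558,-12557,16450,28542,-28272,27182,-28987],
  [0,0,0,0,0,0,0,0,0,0,0,0,0,0,0,0,0,0,0,0,0,0,0,0,0,0,0,0,0,0,0,0,0,0,0,0,0,0,0,0,0,37698,-31659,-8401,-24041,-35347,5720,37682],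
  [0,0,0,0,0,0,0,0,0,0,0,0,0,0,0,0,0,0,0,0,0,0,0,0,0,0,0,0,0,0,0,0,0,0,0,0,0,0,0,0,0,0,57437,13495,31014,-12504,3241,57397],
  [0,0,0,0,0,0,0,0,0,0,0,0,0,0,0,0,0,0,0,0,0,0,0,0,0,0,0,0,0,0,0,0,0,0,0,0,0,0,0,0,0,0,0,52443,-18343,52216,-46612,52429],
  [0,0,0,0,0,0,0,0,0,0,0,0,0,0,0,0,0,0,0,0,0,0,0,0,0,0,0,0,0,0,0,0,0,0,0,0,0,0,0,0,0,0,0,0,73816,-67244,-73548,73679],
  [0,0,0,0,0,0,0,0,0,0,0,0,0,0,0,0,0,0,0,0,0,0,0,0,0,0,0,0,0,0,0,0,0,0,0,0,0,0,0,0,0,0,0,0,0,116440,-24552,116390],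
  [0,0,0,0,0,0,0,0,0,0,0,0,0,0,0,0,0,0,0,0,0,0,0,0,0,0,0,0,0,0,0,0,0,0,0,0,0,0,0,0,0,0,0,0,0,0,165394,165361],
  [0,0,0,0,0,0,0,0,0,0,0,0,0,0,0,0,0,0,0,0,0,0,0,0,0,0,0,0,0,0,0,0,0,0,0,0,0,0,0,0,0,0,0,0,0,0,0,705848]]"

lemma K1: "chkL 0 47 Lz"
  unfolding Lz_def by (simp only: chkL.simps chkRowL.simps zeros.simps numeral_eq_Suc pred_numeral_simps arith_simps arith_special more_arith_simps mult_minus1 mult_minus1_right rel_simps simp_thms list.pred_inject zip_Cons_Cons zip_Nil list.map prod.case)

lemma K2: "chkU 0 47 Uz"
  unfolding Uz_def by (simp only: chkU.simps chkRowU.simps bnd.simps numeral_eq_Suc pred_numeral_simps arith_simps arith_special more_arith_simps mult_minus1 mult_minus1_right rel_simps simp_thms list.pred_inject zip_Cons_Cons zip_Nil list.map prod.case)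

lemma K3: "list_all (\<lambda>r. list_all (\<lambda>x. \<bar>x\<bar> \<le> 1045588) (comb r Uz)) Lz"
  unfolding Lz_def Uz_def by (simp only: comb.simps arith_simps arith_special more_arith_simps mult_minus1 mult_minus1_right rel_simps simp_thms list.pred_inject zip_Cons_Cons zip_Nil list.map prod.case)

lemma K4: "Uz!47!47 = 705848"
  unfolding Uz_def by (simp only: nth_Cons_0 nth_Cons_Suc numeral_eq_Suc pred_numeral_simps arith_simps arith_special more_arith_simps mult_minus1 mult_minus1_right rel_simps simp_thms list.pred_inject zip_Cons_Cons zip_Nil list.map prod.case)

lemma zeros_sound: "zeros a xs \<Longrightarrow> length xs = a \<and> (\<forall>j<length xs. xs!j = 0)"
proof (induction a xs rule: zeros.induct)
  case (2 a x xs) then show ?case by (auto simp: nth_Cons split: nat.splits)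
qed auto

lemma chkRowL_sound: "chkRowL k a xs \<Longrightarrow> length xs = k + 1 + a \<and> (\<forall>j<k. \<bar>xs!j\<bar> \<le> 1000)
   \<and> xs!k = 1000 \<and> (\<forall>j. k < j \<longrightarrow> j < length xs \<longrightarrow> xs!j = 0)"
proof (induction k a xs rule: chkRowL.induct)
  case (1 k a x xs) then show ?case by (auto simp: nth_Cons split: nat.splits)
next
  case (2 a x xs) then show ?case using zeros_sound[of a xs] by (auto simp: nth_Cons split: nat.splits)
qed auto

lemma chkL_sound: "chkL k a rs \<Longrightarrow> length rs = a + 1 \<and> (\<forall>m<length rs. chkRowL (k+m) (a-m) (rs!m))"
proof (induction k a rs rule: chkL.induct)
  case (2 k a r rs) then show ?case by (auto simp: nth_Cons split: nat.splits)
qed auto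

lemma bnd_sound: "bnd d a xs \<Longrightarrow> length xs = a \<and> (\<forall>j<length xs. \<bar>xs!j\<bar> \<le> \<bar>d\<bar>)"
proof (induction d a xs rule: bnd.induct)
  case (2 d a x xs) then show ?case by (auto simp: nth_Cons split: nat.splits)
qed auto

lemma chkRowU_sound: "chkRowU k a xs \<Longrightarrow> length xs = k + 1 + a \<and> (\<forall>j<k. xs!j = 0)
   \<and> xs!k \<noteq> 0 \<and> (\<forall>j. k < j \<longrightarrow> j < length xs \<longrightarrow> \<bar>xs!j\<bar> \<le> \<bar>xs!k\<bar>)"
proof (induction k a xs rule: chkRowU.induct)
  case (1 k a x xs) then show ?case by (auto simp: nth_Cons split: nat.splits)
next
  case (2 a x xs) then show ?case using bnd_sound[of x a xs] by (auto simp: nth_Cons split: nat.splits)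
qed auto

lemma chkU_sound: "chkU k a rs \<Longrightarrow> length rs = a + 1 \<and> (\<forall>m<length rs. chkRowU (k+m) (a-m) (rs!m))"
proof (induction k a rs rule: chkU.induct)
  case (2 k a r rs) then show ?case by (auto simp: nth_Cons split: nat.splits)
qed auto

lemma comb_sound: "length cs = length us \<Longrightarrow> cs \<noteq> [] \<Longrightarrow> (\<forall>u\<in>set us. length u = m) \<Longrightarrow>
  length (comb cs us) = m \<and> (\<forall>j<m. comb cs us ! j = (\<Sum>l<length cs. cs!l * us!l!j))"
proof (induction cs arbitrary: us)
  case Nil then show ?case by simp
next
  case (Cons c cs)
  then obtain u us' where us: "us = u # us'" by (cases us) auto
  have lu: "length u = m" using Cons.prems us by auto
  show ?case
  proof (cases "cs = []")
    case True then have "us' = []" using Cons.prems us by simp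
    then show ?thesis using True us lu by simp
  next
    case False
    then obtain v va where cs: "cs = v # va" by (cases cs) auto
    from Cons.IH[of us'] have ih: "length (comb cs us') = m \<and> (\<forall>j<m. comb cs us' ! j = (\<Sum>l<length cs. cs!l * us'!l!j))"
      using Cons.prems us False by auto
    show ?thesis
    proof (intro conjI allI impI)
      show "length (comb (c # cs) us) = m" using ih lu us cs by simp
      fix j assume j: "j < m"
      have "comb (c # cs) us ! j = c * u!j + comb cs us' ! j" using ih lu j us cs by simp
      also have "\<dots> = c * u!j + (\<Sum>l<length cs. cs!l * us'!l!j)" using ih j by simp
      also have "\<dots> = (\<Sum>l<length (c#cs). (c#cs)!l * us!l!j)"
        unfolding us by (subst length_Cons, subst sum.lessThan_Suc_shift) simp
      finally show "comb (c # cs) us ! j = (\<Sum>l<length (c#cs). (c#cs)!l * us!l!j)" .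
    qed
  qed
qed

definition Lr :: "nat \<Rightarrow> nat \<Rightarrow> real" where
  "Lr i j = (if i < 48 \<and> j < 48 then real_of_int (Lz!i!j) / 1000 else 0)"
definition Ur :: "nat \<Rightarrow> nat \<Rightarrow> real" where
  "Ur i j = (if i < 48 \<and> j < 48 then real_of_int (Uz!i!j) else 0)"
definition Am :: "nat \<Rightarrow> nat \<Rightarrow> real" where
  "Am i j = (\<Sum>l<48. Lr i l * Ur l j)"

lemma Lfacts: "length Lz = 48" "\<And>m. m < 48 \<Longrightarrow> chkRowL m (47-m) (Lz!m)"
  using chkL_sound[OF K1] by auto

lemma Ufacts: "length Uz = 48" "\<And>m. m < 48 \<Longrightarrow> chkRowU m (47-m) (Uz!m)"
  using chkU_sound[OF K2] by auto

lemma C2': "i < 48 \<Longrightarrow> j < 48 \<Longrightarrow> (i<j \<longrightarrow> Lz!i!j = 0) \<and> (i = j \<longrightarrow> Lz!i!j = 1000) \<and> \<bar>Lz!i!j\<bar> \<le> 1000"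
proof -
  assume ij: "i < 48" "j < 48"
  from chkRowL_sound[OF Lfacts(2)[OF ij(1)]] ij
  show ?thesis by (cases "i < j"; cases "i = j") auto
qed

lemma C3': "i < 48 \<Longrightarrow> j < 48 \<Longrightarrow> (j<i \<longrightarrow> Uz!i!j = 0) \<and> \<bar>Uz!i!j\<bar> \<le> \<bar>Uz!i!i\<bar> \<and> Uz!i!i \<noteq> 0"
proof -
  assume ij: "i < 48" "j < 48"
  from chkRowU_sound[OF Ufacts(2)[OF ij(1)]] ij
  show ?thesis by (cases "j < i"; cases "i = j") auto
qed

lemma C4': assumes "i < 48" "j < 48"
  shows "\<bar>\<Sum>l<48. Lz!i!l * Uz!l!j\<bar> \<le> 1045588"
proof -
  have li: "length (Lz!i) = 48" using chkRowL_sound[OF Lfacts(2)[OF assms(1)]] assms by simp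
  have lu: "\<forall>u\<in>set Uz. length u = 48"
  proof
    fix u assume "u \<in> set Uz"
    then obtain m where "m < length Uz" "u = Uz!m" by (auto simp: in_set_conv_nth)
    then show "length u = 48" using chkRowU_sound[OF Ufacts(2)[of m]] Ufacts(1) by simp
  qed
  have cs: "length (comb (Lz!i) Uz) = 48 \<and> (\<forall>j<48. comb (Lz!i) Uz ! j = (\<Sum>l<length (Lz!i). (Lz!i)!l * Uz!l!j))"
    by (rule comb_sound) (use li lu Ufacts(1) in auto)
  have r: "Lz!i \<in> set Lz" using Lfacts(1) assms by auto
  have c: "comb (Lz!i) Uz ! j \<in> set (comb (Lz!i) Uz)" using cs assms by (intro nth_mem) simp
  have "\<bar>comb (Lz!i) Uz ! j\<bar> \<le> 1045588" using K3 r c unfolding list_all_iff by blast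
  then show ?thesis using cs assms li by simp
qed

lemma C5: "Uz!47!47 = 705848" by (rule K4)

lemma Ldiag: "i<48 \<Longrightarrow> Lr i i = 1" using C2'[of i i] by (simp add: Lr_def)
lemma Lup: "i<j \<Longrightarrow> j<48 \<Longrightarrow> Lr i j = 0" using C2'[of i j] by (simp add: Lr_def)
lemma Lbound: "\<bar>Lr i j\<bar> \<le> 1" using C2'[of i j] by (auto simp: Lr_def)
lemma Ulow: "j<i \<Longrightarrow> i<48 \<Longrightarrow> Ur i j = 0" using C3'[of i j] by (simp add: Ur_def)
lemma Udiag: "i<48 \<Longrightarrow> Ur i i \<noteq> 0" using C3'[of i i] by (simp add: Ur_def)
lemma Ubound: "i<48 \<Longrightarrow> \<bar>Ur i j\<bar> \<le> \<bar>Ur i i\<bar>" using C3'[of i j] by (auto simp: Ur_def)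

lemma Am_schur: "k \<le> 48 \<Longrightarrow> k \<le> i \<Longrightarrow> i < 48 \<Longrightarrow> k \<le> j \<Longrightarrow> j < 48 \<Longrightarrow>
     ge_stage Am k i j = (\<Sum>l\<in>{k..<48}. Lr i l * Ur l j)"
  by (rule schur[of 48 Lr Ur Am]) (auto simp: Ldiag Lup Ulow Udiag Am_def)

lemma st_kk: "k < 48 \<Longrightarrow> ge_stage Am k k k = Ur k k"
proof -
  assume k: "k < 48"
  have "(\<Sum>l\<in>{k..<48}. Lr k l * Ur l k) = Lr k k * Ur k k + (\<Sum>l\<in>{Suc k..<48}. Lr k l * Ur l k)"
    using k by (simp add: sum.atLeast_Suc_lessThan)
  also have "(\<Sum>l\<in>{Suc k..<48}. Lr k l * Ur l k) = 0" by (rule sum.neutral) (auto simp: Lup)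
  finally show ?thesis using Am_schur[of k k k] k Ldiag[OF k] by simp
qed

lemma st_ik: "k < 48 \<Longrightarrow> k \<le> i \<Longrightarrow> i < 48 \<Longrightarrow> ge_stage Am k i k = Lr i k * Ur k k"
proof -
  assume k: "k < 48" "k \<le> i" "i < 48"
  have "(\<Sum>l\<in>{k..<48}. Lr i l * Ur l k) = Lr i k * Ur k k + (\<Sum>l\<in>{Suc k..<48}. Lr i l * Ur l k)"
    using k by (simp add: sum.atLeast_Suc_lessThan)
  also have "(\<Sum>l\<in>{Suc k..<48}. Lr i l * Ur l k) = 0" by (rule sum.neutral) (auto simp: Ulow)
  finally show ?thesis using Am_schur[of k i k] k by simp
qed

lemma st_ki: "k < 48 \<Longrightarrow> k \<le> i \<Longrightarrow> i < 48 \<Longrightarrow> ge_stage Am k k i = Ur k i"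
proof -
  assume k: "k < 48" "k \<le> i" "i < 48"
  have "(\<Sum>l\<in>{k..<48}. Lr k l * Ur l i) = Lr k k * Ur k i + (\<Sum>l\<in>{Suc k..<48}. Lr k l * Ur l i)"
    using k by (simp add: sum.atLeast_Suc_lessThan)
  also have "(\<Sum>l\<in>{Suc k..<48}. Lr k l * Ur l i) = 0" by (rule sum.neutral) (auto simp: Lup)
  finally show ?thesis using Am_schur[of k k i] k Ldiag[of k] by simp
qed

lemma Am_RP: "Am \<in> RP 48"
  unfolding RP_def
proof (intro CollectI conjI allI impI)
  fix i j :: nat assume "48 \<le> i \<or> 48 \<le> j"
  then show "Am i j = 0" by (auto simp: Am_def Lr_def Ur_def)
next
  show "Defs.invertible_mat 48 Am"
    using inv_LU[of 48 Lr Ur] Ldiag Lup Ulow Udiag unfolding Am_def by blast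
next
  show "ge_defined 48 Am" unfolding ge_defined_def using st_kk Udiag by simp
next
  fix k i :: nat assume a: "k < 48" "k \<le> i \<and> i < 48"
  show "\<bar>ge_stage Am k i k\<bar> \<le> \<bar>ge_stage Am k k k\<bar>"
  proof -
    have "\<bar>ge_stage Am k i k\<bar> = \<bar>Lr i k\<bar> * \<bar>Ur k k\<bar>" using a st_ik by (simp add: abs_mult)
    also have "\<dots> \<le> \<bar>Ur k k\<bar>" using Lbound[of i k] by (intro mult_left_le_one_le) auto
    also have "\<dots> = \<bar>ge_stage Am k k k\<bar>" using a st_kk by simp
    finally show ?thesis .
  qed
  show "\<bar>ge_stage Am k k i\<bar> \<le> \<bar>ge_stage Am k k k\<bar>"
    using a st_ki st_kk Ubound by simp
qed

lemma Am_bound: "i < 48 \<Longrightarrow> j < 48 \<Longrightarrow> \<bar>Am i j\<bar> \<le> 1045588 / 1000"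
proof -
  assume ij: "i < 48" "j < 48"
  define s where "s = (\<Sum>l<48. Lz!i!l * Uz!l!j)"
  have h: "Am i j = real_of_int s / 1000"
    unfolding Am_def Lr_def Ur_def s_def using ij by (simp add: sum_divide_distrib)
  have "real_of_int \<bar>s\<bar> \<le> real_of_int 1045588" using C4'[OF ij] unfolding s_def by (simp only: of_int_le_iff)
  then have "\<bar>real_of_int s\<bar> \<le> 1045588" by simp
  then show ?thesis using h by simp
qed

lemma Am_growth: "growth 48 Am > 640.4861"
proof -
  define S1 where "S1 = {\<bar>ge_stage Am k i j\<bar> | k i j. k < 48 \<and> k \<le> i \<and> i < 48 \<and> k \<le> j \<and> j < 48}"
  define S2 where "S2 = {\<bar>Am i j\<bar> | i j. i < 48 \<and> j < 48}"
  have fS1: "finite S1"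
  proof -
    have "S1 \<subseteq> (\<lambda>(k,i,j). \<bar>ge_stage Am k i j\<bar>) ` ({..<48} \<times> {..<48} \<times> {..<48})"
    proof
      fix x assume "x \<in> S1"
      then obtain k i j where x: "x = \<bar>ge_stage Am k i j\<bar>" and c: "k<48" "k \<le> i" "i<48" "k\<le>j" "j<48"
        unfolding S1_def by blast
      show "x \<in> (\<lambda>(k,i,j). \<bar>ge_stage Am k i j\<bar>) ` ({..<48} \<times> {..<48} \<times> {..<48})"
        by (rule image_eqI[of _ _ "(k,i,j)"]) (simp_all add: x c)
    qed
    then show ?thesis by (rule finite_subset) simp
  qed
  have fS2: "finite S2"
  proof -
    have "S2 \<subseteq> (\<lambda>(i,j). \<bar>Am i j\<bar>) ` ({..<48} \<times> {..<48})"
    proof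
      fix x assume "x \<in> S2"
      then obtain i j where x: "x = \<bar>Am i j\<bar>" and c: "i<48" "j<48"
        unfolding S2_def by blast
      show "x \<in> (\<lambda>(i,j). \<bar>Am i j\<bar>) ` ({..<48} \<times> {..<48})"
        by (rule image_eqI[of _ _ "(i,j)"]) (simp_all add: x c)
    qed
    then show ?thesis by (rule finite_subset) simp
  qed
  have m1: "\<bar>ge_stage Am 47 47 47\<bar> \<in> S1" unfolding S1_def
    by (intro CollectI exI[where x=47]) simp
  have v1: "\<bar>ge_stage Am 47 47 47\<bar> = 705848" using st_kk[of 47] C5 by (simp add: Ur_def)
  have M1: "Max S1 \<ge> 705848" using Max_ge[OF fS1 m1] v1 by simp
  have m2: "\<bar>Am 0 0\<bar> \<in> S2" unfolding S2_def by (intro CollectI exI[where x=0]) simp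
  have ne2: "S2 \<noteq> {}" using m2 by blast
  have M2: "Max S2 \<le> 1045588 / 1000"
  proof (subst Max_le_iff[OF fS2 ne2], intro ballI)
    fix a assume "a \<in> S2"
    then obtain i j where a: "a = \<bar>Am i j\<bar>" and c: "i<48" "j<48"
      unfolding S2_def by blast
    show "a \<le> 1045588 / 1000" using Am_bound[OF c] a by simp
  qed
  have a00: "Am 0 0 = Ur 0 0" using st_kk[of 0] by simp
  have u00: "Ur 0 0 \<noteq> 0" using Udiag[of 0] by simp
  have M2p: "Max S2 > 0" using Max_ge[OF fS2 m2] a00 u00 by simp
  have "growth 48 Am = Max S1 / Max S2" unfolding growth_def S1_def S2_def by simp
  also have "\<dots> \<ge> 705848 / Max S2" using M1 M2p by (simp add: divide_right_mono)
  also have "705848 / Max S2 \<ge> 705848 / (1045588 / 1000)"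
    using M2 M2p by (intro divide_left_mono) auto
  finally have "growth 48 Am \<ge> 705848 / (1045588 / 1000)" .
  moreover have "705848 / (1045588 / 1000) > (640.4861::real)" by simp
  ultimately show ?thesis by linarith
qed

theorem mainTheorem12:
  shows "growth_sup 48 (RP 48) > ereal 640.4861"
proof -
  have "ereal (growth 48 Am) \<le> growth_sup 48 (RP 48)"
    unfolding growth_sup_def using Am_RP by (rule SUP_upper)
  moreover have "ereal 640.4861 < ereal (growth 48 Am)" using Am_growth by simp
  ultimately show ?thesis by order
qed

end
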